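(* Let $n\ge1$, $1\le p<\infty$, and let $K\subset\mathbb R^n$ be an origin-symmetric convex body. For all $f\in L^p(\mathbb R^n)$, $$2|K|\,\|f\|^p_{L^p(\mathbb R^n)}\;\le\;\left[\frac{f(x)-f(y)}{\|x-y\|_K^{\frac np}}\right]^p_{M^p(\mathbb R^n\times\mathbb R^n,\mathcal L^{2n})}\;\le\; 2^{p+1}|K|\,\|f\|^p_{L^p(\mathbb R^n)},$$ where $|K|$ is the volume of $K$. Moreover, setting for $\lambda>0$ $$\widetilde E_{\lambda,K}=\left\{(x,y)\in\mathbb R^n\times\mathbb R^n:\ x\neq y,\ \frac{|f(x)-f(y)|}{\|x-y\|_K^{\frac{n}{p}}}\geq\lambda\right\},$$ one has $$\lim_{\lambda\to0^+}\lambda^p\,\mathcal L^{2n}(\widetilde E_{\lambda,K})=2|K|\,\|f\|^p_{L^p(\mathbb R^n)}.$$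
   Context: A convex body is a compact convex subset of $\mathbb R^n$ with non-empty interior; origin-symmetric means $K=-K$. The Minkowski functional is $\|x\|_K=\inf\{\lambda\ge 0: x\in\lambda K\}$, a norm on $\mathbb R^n$. $\mathcal L^{2n}$ is Lebesgue measure on $\mathbb R^n\times\mathbb R^n$. For a measurable function $g$ on $\mathbb R^n\times\mathbb R^n$ (defined a.e., here off the diagonal $x=y$), the weak $L^p$ (Marcinkiewicz) quasinorm is $[g]^p_{M^p(\mathbb R^n\times\mathbb R^n,\mathcal L^{2n})}=\sup_{\lambda>0}\lambda^p\,\mathcal L^{2n}(\{(x,y): |g(x,y)|\ge\lambda\})$. *)

theory Defs
  imports "HOL-Analysis.Analysis"
begin

definition minkowski_functional :: "'a::real_vector set \<Rightarrow> 'a \<Rightarrow> real" where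
  "minkowski_functional K x = Inf {t::real. t \<ge> 0 \<and> x \<in> (\<lambda>s. t *\<^sub>R s) ` K}"

text \<open>Weak L^p (Marcinkiewicz) quasinorm to the p-th power, w.r.t. a measure M.\<close>
definition weak_Lp_pow :: "'b measure \<Rightarrow> real \<Rightarrow> ('b \<Rightarrow> real) \<Rightarrow> ennreal" where
  "weak_Lp_pow M p g = (SUP t\<in>{0<..}. ennreal (t powr p) * emeasure M {z \<in> space M. \<bar>g z\<bar> \<ge> t})"

end

theory Submission imports Defs begin

lemma Markov_gen: fixes h :: "'a::euclidean_space \<Rightarrow> real"
  assumes s: "s > 0" and h[measurable]: "h \<in> borel_measurable lborel" and hn: "\<And>x. h x \<ge> 0"
  shows "emeasure lborel {x. s \<le> h x} \<le> ennreal (1/s) * (\<integral>\<^sup>+x. ennreal (h x) \<partial>lborel)"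
proof -
  have "emeasure lborel {x\<in>UNIV. 1 \<le> ennreal (1/s) * ennreal (h x)}
     \<le> ennreal (1/s) * (\<integral>\<^sup>+ x. ennreal (h x) * indicator UNIV x \<partial>lborel)"
    by (rule nn_integral_Markov_inequality) auto
  moreover have "{x\<in>UNIV. 1 \<le> ennreal (1/s) * ennreal (h x)} = {x. s \<le> h x}"
  proof -
    have "1 \<le> ennreal (1/s) * ennreal (h x) \<longleftrightarrow> s \<le> h x" for x
    proof -
      have "ennreal (1/s) * ennreal (h x) = ennreal ((1/s) * h x)"
        using s hn[of x] by (intro ennreal_mult[symmetric]) auto
      moreover have "(1::ennreal) = ennreal 1" by simp
      moreover have "ennreal 1 \<le> ennreal ((1/s) * h x) \<longleftrightarrow> 1 \<le> (1/s) * h x"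
        using s hn[of x] by (intro ennreal_le_iff) auto
      moreover have "1 \<le> (1/s) * h x \<longleftrightarrow> s \<le> h x"
        using s by (simp add: field_simps)
      ultimately show ?thesis by metis
    qed
    then show ?thesis by auto
  qed
  ultimately show ?thesis by simp
qed

locale kp =
  fixes K :: "'a::euclidean_space set" and p :: real
  assumes p1: "1 \<le> p" and cK: "compact K" and cvK: "convex K"
    and iK: "interior K \<noteq> {}" and sK: "uminus ` K = K"
begin

abbreviation N where "N \<equiv> minkowski_functional K"

lemma neg_in: "k \<in> K \<Longrightarrow> - k \<in> K"
  using sK by force

lemma ball0: "\<exists>e>0. ball 0 e \<subseteq> K"
proof -
  obtain a where a: "a \<in> interior K" using iK by auto
  then obtain e where e: "e > 0" "ball a e \<subseteq> K" using mem_interior by blast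
  have "ball 0 e \<subseteq> K"
  proof
    fix z :: 'a assume z: "z \<in> ball 0 e"
    have 1: "a + z \<in> K" using e z by (auto simp: dist_norm subset_iff)
    have "a - z \<in> K" using e z by (auto simp: dist_norm subset_iff)
    then have 2: "z - a \<in> K" using neg_in[of "a - z"] by simp
    have "(1/2) *\<^sub>R (a + z) + (1/2) *\<^sub>R (z - a) \<in> K"
      using cvK 1 2 by (intro convexD) auto
    moreover have "(1/2) *\<^sub>R (a + z) + (1/2) *\<^sub>R (z - a) = z"
      by (simp add: scaleR_right_diff_distrib scaleR_right_distrib flip: scaleR_add_left)
    ultimately show "z \<in> K" by simp
  qed
  with e show ?thesis by blast
qed

lemma zero_in: "0 \<in> K"
  using ball0 by auto

lemma bndK: "\<exists>B>0. \<forall>k\<in>K. norm k \<le> B"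
  using compact_imp_bounded[OF cK] bounded_pos by blast

definition T where "T z = {t::real. t \<ge> 0 \<and> z \<in> (\<lambda>s. t *\<^sub>R s) ` K}"

lemma N_def': "N z = Inf (T z)"
  unfolding minkowski_functional_def T_def by simp

lemma T_pos: "t > 0 \<Longrightarrow> t \<in> T z \<longleftrightarrow> (1/t) *\<^sub>R z \<in> K"
proof -
  assume t: "t > 0"
  have "z \<in> (\<lambda>s. t *\<^sub>R s) ` K \<longleftrightarrow> (1/t) *\<^sub>R z \<in> K"
  proof
    assume "z \<in> (\<lambda>s. t *\<^sub>R s) ` K" then obtain s where "s \<in> K" "z = t *\<^sub>R s" by auto
    then show "(1/t) *\<^sub>R z \<in> K" using t by (auto simp: scaleR_scaleR)
  next
    assume "(1/t) *\<^sub>R z \<in> K"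
    moreover have "z = t *\<^sub>R ((1/t) *\<^sub>R z)" using t by simp
    ultimately show "z \<in> (\<lambda>s. t *\<^sub>R s) ` K" by blast
  qed
  then show ?thesis using t unfolding T_def by simp
qed

lemma T_up: assumes "t \<in> T z" "t \<le> s" "s > 0" shows "s \<in> T z"
proof (cases "t = 0")
  case True
  then have "z = 0" using assms unfolding T_def by auto
  then show ?thesis using T_pos[of s z] assms zero_in by simp
next
  case False
  then have t: "t > 0" using assms unfolding T_def by auto
  then have k: "(1/t) *\<^sub>R z \<in> K" using T_pos assms by blast
  have "(t/s) *\<^sub>R ((1/t) *\<^sub>R z) + (1 - t/s) *\<^sub>R 0 \<in> K"
    using cvK k zero_in t assms by (intro convexD) auto
  moreover have "(t/s) *\<^sub>R ((1/t) *\<^sub>R z) + (1 - t/s) *\<^sub>R 0 = (1/s) *\<^sub>R z"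
    using t by simp
  ultimately have "(1/s) *\<^sub>R z \<in> K" by metis
  then show ?thesis using T_pos[of s z] assms by simp
qed

lemma T_ne: "T z \<noteq> {}"
proof -
  obtain e where e: "e > 0" "ball 0 e \<subseteq> K" using ball0 by blast
  define t where "t = norm z / e * 2 + 1"
  have t: "t > 0" using e unfolding t_def by (intro add_nonneg_pos) auto
  have et: "e * t = 2 * norm z + e" using e unfolding t_def by (simp add: field_simps)
  have "norm z < e * t" unfolding et using e norm_ge_zero[of z] by linarith
  then have "norm ((1/t) *\<^sub>R z) < e" using t by (simp add: field_simps)
  then have "(1/t) *\<^sub>R z \<in> K" using e by auto
  then show ?thesis using T_pos[OF t] by blast
qed

lemma T_bdd: "bdd_below (T z)"
  unfolding T_def by (rule bdd_belowI[of _ 0]) auto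

lemma N_nonneg: "N z \<ge> 0"
  unfolding N_def' using T_ne by (intro cInf_greatest) (auto simp: T_def)

lemma N_le_pos: assumes r: "r > 0" shows "N z \<le> r \<longleftrightarrow> (1/r) *\<^sub>R z \<in> K"
proof
  assume "(1/r) *\<^sub>R z \<in> K"
  then have "r \<in> T z" using T_pos[OF r] by simp
  then show "N z \<le> r" unfolding N_def' using T_bdd by (rule cInf_lower)
next
  assume le: "N z \<le> r"
  have all: "(1/s) *\<^sub>R z \<in> K" if s: "s > r" for s
  proof -
    have "Inf (T z) < s" using le s N_def' by simp
    then obtain t where "t \<in> T z" "t < s" using cInf_less_iff[OF T_ne T_bdd] by blast
    then have "s \<in> T z" using T_up s r by auto
    then show ?thesis using T_pos s r by auto
  qed
  have l1: "(\<lambda>k. r + inverse (real (Suc k))) \<longlonglongrightarrow> r + 0"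
    by (intro tendsto_add tendsto_const LIMSEQ_inverse_real_of_nat)
  have l2: "(\<lambda>k. 1 / (r + inverse (real (Suc k)))) \<longlonglongrightarrow> 1 / r"
    using tendsto_divide[OF tendsto_const l1, of 1] r by simp
  have lim: "(\<lambda>k. (1 / (r + inverse (real (Suc k)))) *\<^sub>R z) \<longlonglongrightarrow> (1/r) *\<^sub>R z"
    by (intro tendsto_scaleR l2 tendsto_const)
  have pos: "r + inverse (real (Suc k)) > r" for k by simp
  show "(1/r) *\<^sub>R z \<in> K"
    using closed_sequentially[OF compact_imp_closed[OF cK] _ lim] all pos by blast
qed

lemma N_le_0: "N z \<le> 0 \<longleftrightarrow> z = 0"
proof
  assume "z = 0"
  then have "0 \<in> T z" unfolding T_def using zero_in by auto
  then show "N z \<le> 0" unfolding N_def' using T_bdd by (rule cInf_lower)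
next
  assume z: "N z \<le> 0"
  obtain B where B: "B > 0" "\<forall>k\<in>K. norm k \<le> B" using bndK by blast
  have "norm z \<le> s * B" if s: "s > 0" for s
  proof -
    have "N z \<le> s" using z s by linarith
    then have "(1/s) *\<^sub>R z \<in> K" using N_le_pos[OF s] by blast
    then have "norm ((1/s) *\<^sub>R z) \<le> B" using B by blast
    then show ?thesis using s by (simp add: field_simps)
  qed
  note h = this
  have "norm z \<le> 0"
  proof (rule ccontr)
    assume "\<not> norm z \<le> 0"
    then have nz: "norm z > 0" by simp
    have "norm z \<le> (norm z / (2*B)) * B" using h[of "norm z / (2*B)"] nz B by simp
    also have "\<dots> = norm z / 2" using B by simp
    finally show False using nz by simp
  qed
  then show "z = 0" by simp
qed

lemma N_neg: "N (- z) = N z"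
proof -
  have "T (- z) = T z"
    unfolding T_def using neg_in by (auto simp: image_iff) (metis minus_minus scaleR_minus_right neg_in)+
  then show ?thesis unfolding N_def' by simp
qed

lemma N_le_iff: "N z \<le> r \<longleftrightarrow> (if r > 0 then (1/r) *\<^sub>R z \<in> K else r = 0 \<and> z = 0)"
  using N_le_pos[of r z] N_le_0[of z] N_nonneg[of z] by auto

lemma N_meas[measurable]: "N \<in> borel_measurable borel"
proof (subst borel_measurable_iff_le, intro allI)
  fix a :: real
  show "{w \<in> space borel. N w \<le> a} \<in> sets borel"
  proof (cases "a > 0")
    case True
    have "{w \<in> space borel. N w \<le> a} = (\<lambda>w. (1/a) *\<^sub>R w) -` K"
      using N_le_pos[OF True] by auto
    moreover have "closed ((\<lambda>w. (1/a) *\<^sub>R w) -` K)"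
      by (intro closed_vimage compact_imp_closed cK continuous_intros)
    ultimately show ?thesis by simp
  next
    case False
    then have "{w \<in> space borel. N w \<le> a} = (if a = 0 then {0} else {})"
      using N_le_iff[of _ a] by auto
    then show ?thesis by simp
  qed
qed

lemma K_sets[measurable]: "K \<in> sets borel"
  using cK by (simp add: compact_imp_closed borel_closed)

lemma ball_meas: assumes r: "r \<ge> 0"
  shows "emeasure lborel {y. N (x - y) \<le> r} = ennreal (r ^ DIM('a)) * emeasure lborel K"
proof (cases "r = 0")
  case True
  then have "{y. N (x - y) \<le> r} = {x}" using N_le_0 by auto
  then show ?thesis using True by (simp add: emeasure_lborel_countable)
next
  case False
  then have rp: "r > 0" using r by simp
  have eq: "{y. N (x - y) \<le> r} = (\<lambda>k. (- r) *\<^sub>R k + x) ` K"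
  proof (intro set_eqI iffI)
    fix y assume "y \<in> {y. N (x - y) \<le> r}"
    then have "(1/r) *\<^sub>R (x - y) \<in> K" using N_le_pos[OF rp] by simp
    moreover have "y = (- r) *\<^sub>R ((1/r) *\<^sub>R (x - y)) + x" using rp by (simp add: algebra_simps)
    ultimately show "y \<in> (\<lambda>k. (- r) *\<^sub>R k + x) ` K" by blast
  next
    fix y assume "y \<in> (\<lambda>k. (- r) *\<^sub>R k + x) ` K"
    then obtain k where k: "k \<in> K" "y = (- r) *\<^sub>R k + x" by auto
    then have "x - y = r *\<^sub>R k" by simp
    then have "(1/r) *\<^sub>R (x - y) = k" using rp by simp
    then show "y \<in> {y. N (x - y) \<le> r}" using N_le_pos[OF rp] k by simp
  qed
  have m: "{y. N (x - y) \<le> r} \<in> sets borel"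
  proof -
    have "Measurable.pred borel (\<lambda>y. N (x - y) \<le> r)" by measurable
    then show ?thesis by (simp add: pred_def)
  qed
  have "emeasure lborel {y. N (x - y) \<le> r} = emeasure lebesgue {y. N (x - y) \<le> r}"
    using m by simp
  also have "\<dots> = \<bar>- r\<bar> ^ DIM('a) * emeasure lebesgue K"
    unfolding eq by (rule emeasure_lebesgue_affine)
  also have "\<dots> = ennreal (r ^ DIM('a)) * emeasure lborel K"
    using rp by simp
  finally show ?thesis .
qed

definition q where "q = real DIM('a) / p"

lemma p_pos: "p > 0" using p1 by simp
lemma q_pos: "q > 0" unfolding q_def using p_pos by simp

lemma powr_cond: assumes "a \<ge> 0" "b \<ge> 0" "c > 0"
  shows "c * a powr q \<le> b \<longleftrightarrow> a \<le> (b / c) powr (1/q)"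
proof -
  have "c * a powr q \<le> b \<longleftrightarrow> a powr q \<le> b / c" using assms by (simp add: field_simps mult.commute)
  also have "\<dots> \<longleftrightarrow> (a powr q) powr (1/q) \<le> (b / c) powr (1/q)"
  proof
    assume "a powr q \<le> b / c" then show "(a powr q) powr (1/q) \<le> (b / c) powr (1/q)"
      using q_pos by (intro powr_mono2) auto
  next
    assume h: "(a powr q) powr (1/q) \<le> (b / c) powr (1/q)"
    have "a powr q = ((a powr q) powr (1/q)) powr q" using q_pos assms by (simp add: powr_powr)
    also have "\<dots> \<le> ((b / c) powr (1/q)) powr q" by (rule powr_mono2[OF _ _ h]) (use q_pos in auto)
    also have "\<dots> = b / c" using q_pos assms by (simp add: powr_powr)
    finally show "a powr q \<le> b / c" .
  qed
  also have "(a powr q) powr (1/q) = a" using q_pos assms by (simp add: powr_powr)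
  finally show ?thesis .
qed

lemma sec: assumes "b \<ge> 0" "c > 0"
  shows "emeasure lborel {y. c * N (x - y) powr q \<le> b} = ennreal ((b / c) powr p) * emeasure lborel K"
proof -
  have "{y. c * N (x - y) powr q \<le> b} = {y. N (x - y) \<le> (b / c) powr (1/q)}"
    using powr_cond[OF N_nonneg assms(1,2)] by auto
  moreover have "((b / c) powr (1/q)) ^ DIM('a) = (b / c) powr p"
  proof -
    have "((b / c) powr (1/q)) ^ DIM('a) = ((b / c) powr (1/q)) powr (real DIM('a))"
      by (simp add: powr_realpow')
    also have "\<dots> = (b / c) powr p" using p_pos by (simp add: powr_powr q_def)
    finally show ?thesis .
  qed
  ultimately show ?thesis using ball_meas[of "(b / c) powr (1/q)" x] by simp
qed

end

locale kpg = kp K p for K :: "'a::euclidean_space set" and p +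
  fixes g :: "'a \<Rightarrow> real"
  assumes g_meas[measurable]: "g \<in> borel_measurable borel"
    and g_int: "integrable lborel (\<lambda>x. \<bar>g x\<bar> powr p)"
begin

definition Sx where "Sx c P = {z. fst z \<in> P \<and> c * N (fst z - snd z) powr q \<le> \<bar>g (fst z)\<bar>}"
definition Sy where "Sy c P = {z. snd z \<in> P \<and> c * N (fst z - snd z) powr q \<le> \<bar>g (snd z)\<bar>}"
definition Ip where "Ip P = (\<integral>\<^sup>+x. indicator P x * ennreal (\<bar>g x\<bar> powr p) \<partial>lborel)"
abbreviation KM where "KM \<equiv> emeasure lborel K"

lemma fst_meas[measurable]: "(fst :: 'a \<times> 'a \<Rightarrow> 'a) \<in> borel_measurable (lborel \<Otimes>\<^sub>M lborel)"
  using measurable_fst[of "lborel :: 'a measure" "lborel :: 'a measure"] by simp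
lemma snd_meas[measurable]: "(snd :: 'a \<times> 'a \<Rightarrow> 'a) \<in> borel_measurable (lborel \<Otimes>\<^sub>M lborel)"
  using measurable_snd[of "lborel :: 'a measure" "lborel :: 'a measure"] by simp
lemma g_meas'[measurable]: "g \<in> borel_measurable lborel"
  using g_meas by simp

lemma pred_sets: "Measurable.pred M P \<Longrightarrow> space M = UNIV \<Longrightarrow> {x. P x} \<in> sets M"
  by (simp add: pred_def)

lemma Sx_sets[measurable]: assumes [measurable]: "P \<in> sets borel" shows "Sx c P \<in> sets (lborel \<Otimes>\<^sub>M lborel)"
  unfolding Sx_def by (rule pred_sets) (measurable, simp add: space_pair_measure)

lemma Sy_sets[measurable]: assumes [measurable]: "P \<in> sets borel" shows "Sy c P \<in> sets (lborel \<Otimes>\<^sub>M lborel)"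
  unfolding Sy_def by (rule pred_sets) (measurable, simp add: space_pair_measure)

lemma powr_split: "c > 0 \<Longrightarrow> (\<bar>b\<bar> / c) powr p = \<bar>b\<bar> powr p * c powr (- p)"
  by (simp add: powr_divide powr_minus_divide)

lemma Sx_meas: assumes c: "c > 0" and P: "P \<in> sets borel"
  shows "emeasure (lborel \<Otimes>\<^sub>M lborel) (Sx c P) = KM * ennreal (c powr (- p)) * Ip P"
proof -
  note [measurable] = P
  have [measurable]: "P \<in> sets lborel" using P by simp
  have "emeasure (lborel \<Otimes>\<^sub>M lborel) (Sx c P) = (\<integral>\<^sup>+x. emeasure lborel (Pair x -` Sx c P) \<partial>lborel)"
    using P by (intro lborel.emeasure_pair_measure_alt) measurable
  also have "\<dots> = (\<integral>\<^sup>+x. KM * ennreal (c powr (- p)) * (indicator P x * ennreal (\<bar>g x\<bar> powr p)) \<partial>lborel)"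
  proof (intro nn_integral_cong)
    fix x :: 'a
    show "emeasure lborel (Pair x -` Sx c P) = KM * ennreal (c powr (- p)) * (indicator P x * ennreal (\<bar>g x\<bar> powr p))"
    proof (cases "x \<in> P")
      case True
      then have "Pair x -` Sx c P = {y. c * N (x - y) powr q \<le> \<bar>g x\<bar>}" unfolding Sx_def by auto
      then show ?thesis using sec[of "\<bar>g x\<bar>" c x] c True powr_split[OF c, of "g x"]
        by (simp add: ennreal_mult' mult_ac)
    next
      case False
      then have "Pair x -` Sx c P = {}" unfolding Sx_def by auto
      then show ?thesis using False by simp
    qed
  qed
  also have "\<dots> = KM * ennreal (c powr (- p)) * Ip P"
    unfolding Ip_def by (rule nn_integral_cmult) measurable
  finally show ?thesis .
qed

lemma Sy_meas: assumes c: "c > 0" and P: "P \<in> sets borel"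
  shows "emeasure (lborel \<Otimes>\<^sub>M lborel) (Sy c P) = KM * ennreal (c powr (- p)) * Ip P"
proof -
  note [measurable] = P
  have [measurable]: "P \<in> sets lborel" using P by simp
  have "emeasure (lborel \<Otimes>\<^sub>M lborel) (Sy c P) = (\<integral>\<^sup>+y. emeasure lborel ((\<lambda>x. (x, y)) -` Sy c P) \<partial>lborel)"
    using P by (intro lborel_pair.emeasure_pair_measure_alt2) measurable
  also have "\<dots> = (\<integral>\<^sup>+x. KM * ennreal (c powr (- p)) * (indicator P x * ennreal (\<bar>g x\<bar> powr p)) \<partial>lborel)"
  proof (intro nn_integral_cong)
    fix y :: 'a
    show "emeasure lborel ((\<lambda>x. (x, y)) -` Sy c P) = KM * ennreal (c powr (- p)) * (indicator P y * ennreal (\<bar>g y\<bar> powr p))"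
    proof (cases "y \<in> P")
      case True
      have "N (x - y) = N (y - x)" for x using N_neg[of "y - x"] by simp
      then have "(\<lambda>x. (x, y)) -` Sy c P = {x. c * N (y - x) powr q \<le> \<bar>g y\<bar>}" using True unfolding Sy_def by auto
      then show ?thesis using sec[of "\<bar>g y\<bar>" c y] c True powr_split[OF c, of "g y"]
        by (simp add: ennreal_mult' mult_ac)
    next
      case False
      then have "(\<lambda>x. (x, y)) -` Sy c P = {}" unfolding Sy_def by auto
      then show ?thesis using False by simp
    qed
  qed
  also have "\<dots> = KM * ennreal (c powr (- p)) * Ip P"
    unfolding Ip_def by (rule nn_integral_cmult) measurable
  finally show ?thesis .
qed

abbreviation \<mu> where "\<mu> \<equiv> (lborel \<Otimes>\<^sub>M lborel :: ('a \<times> 'a) measure)"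

definition E where "E t = {z. fst z \<noteq> snd z \<and> t \<le> \<bar>g (fst z) - g (snd z)\<bar> / N (fst z - snd z) powr q}"
definition D where "D t a b = {z. a * t * N (fst z - snd z) powr q \<le> \<bar>g (fst z)\<bar> \<and> b * t * N (fst z - snd z) powr q \<le> \<bar>g (snd z)\<bar>}"
definition Ps where "Ps s = {x. \<bar>g x\<bar> powr p < s}"
abbreviation F where "F \<equiv> Ip UNIV"
definition diag where "diag = {z::'a\<times>'a. fst z = snd z}"

lemma E_sets[measurable]: "E t \<in> sets \<mu>"
  unfolding E_def by (rule pred_sets) (measurable, simp add: space_pair_measure)
lemma D_sets[measurable]: "D t a b \<in> sets \<mu>"
  unfolding D_def by (rule pred_sets) (measurable, simp add: space_pair_measure)
lemma Ps_sets[measurable]: "Ps s \<in> sets borel"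
proof -
  have "(\<lambda>x. \<bar>g x\<bar> powr p) \<in> borel_measurable borel" by measurable
  then have "Measurable.pred borel (\<lambda>x. \<bar>g x\<bar> powr p < s)" by measurable
  then show ?thesis unfolding Ps_def by (simp add: pred_def)
qed
lemma diag_sets[measurable]: "diag \<in> sets \<mu>"
  unfolding diag_def by (rule pred_sets) (measurable, simp add: space_pair_measure)

lemma diag_null: "emeasure \<mu> diag = 0"
proof -
  have "emeasure \<mu> diag = (\<integral>\<^sup>+x. emeasure lborel (Pair x -` diag) \<partial>lborel)"
    by (intro lborel.emeasure_pair_measure_alt) measurable
  also have "\<dots> = (\<integral>\<^sup>+x. 0 \<partial>lborel)"
  proof -
    have "Pair x -` diag = {x}" for x unfolding diag_def by auto
    then show ?thesis by (simp add: emeasure_lborel_countable)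
  qed
  finally show ?thesis by simp
qed

lemma F_eq: "F = (\<integral>\<^sup>+x. ennreal (\<bar>g x\<bar> powr p) \<partial>lborel)"
  unfolding Ip_def by simp

lemma F_fin: "F < \<infinity>"
  using g_int unfolding F_eq integrable_iff_bounded by simp

lemma Ip_le: "Ip P \<le> F"
  unfolding Ip_def by (intro nn_integral_mono) (simp add: indicator_def)

lemma KM_fin: "KM < \<infinity>"
  using emeasure_bounded_finite[OF compact_imp_bounded[OF cK]] .

lemma N_pos: "x \<noteq> y \<Longrightarrow> N (x - y) powr q > 0"
  using N_le_0[of "x - y"] N_nonneg[of "x - y"] by simp

lemma E_mem: "z \<in> E t \<longleftrightarrow> fst z \<noteq> snd z \<and> t * N (fst z - snd z) powr q \<le> \<bar>g (fst z) - g (snd z)\<bar>"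
  unfolding E_def using N_pos[of "fst z" "snd z"] by (auto simp: le_divide_eq)

lemma E_sub0: "E t \<subseteq> Sx ((1/2)*t) UNIV \<union> Sy ((1/2)*t) UNIV"
proof
  fix z assume "z \<in> E t"
  then have h: "t * N (fst z - snd z) powr q \<le> \<bar>g (fst z) - g (snd z)\<bar>" using E_mem by blast
  have "\<bar>g (fst z) - g (snd z)\<bar> \<le> \<bar>g (fst z)\<bar> + \<bar>g (snd z)\<bar>" by (rule abs_triangle_ineq4)
  then show "z \<in> Sx ((1/2)*t) UNIV \<union> Sy ((1/2)*t) UNIV"
    unfolding Sx_def Sy_def using h by auto
qed

lemma E_subU: "E t \<subseteq> Sx ((1-d)*t) UNIV \<union> Sy ((1-d)*t) UNIV \<union> D t d d"
proof
  fix z assume "z \<in> E t"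
  then have h: "t * N (fst z - snd z) powr q \<le> \<bar>g (fst z) - g (snd z)\<bar>" using E_mem by blast
  have "\<bar>g (fst z) - g (snd z)\<bar> \<le> \<bar>g (fst z)\<bar> + \<bar>g (snd z)\<bar>" by (rule abs_triangle_ineq4)
  moreover have "(1-d)*t * N (fst z - snd z) powr q = t * N (fst z - snd z) powr q - d * t * N (fst z - snd z) powr q"
    by (simp add: algebra_simps)
  ultimately show "z \<in> Sx ((1-d)*t) UNIV \<union> Sy ((1-d)*t) UNIV \<union> D t d d"
    unfolding Sx_def Sy_def D_def using h by auto
qed

lemma D_sub: "D t a b \<subseteq> Sx (a*t) (Ps s) \<union> Sy (b*t) (Ps s) \<union> (- Ps s) \<times> (- Ps s)"
  unfolding D_def Sx_def Sy_def by auto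

definition Px where "Px t d = Sx ((1+d)*t) UNIV - D t (1+d) d - diag"
definition Py where "Py t d = Sy ((1+d)*t) UNIV - D t d (1+d) - diag"

lemma Px_sub: "t > 0 \<Longrightarrow> d > 0 \<Longrightarrow> Px t d \<subseteq> E t"
proof
  fix z assume t: "t > 0" and d: "d > 0" and z: "z \<in> Px t d"
  then have ne: "fst z \<noteq> snd z" unfolding Px_def diag_def by auto
  have M: "N (fst z - snd z) powr q > 0" using N_pos[OF ne] .
  have a: "(1+d)*t * N (fst z - snd z) powr q \<le> \<bar>g (fst z)\<bar>" and
    b: "\<not> d*t * N (fst z - snd z) powr q \<le> \<bar>g (snd z)\<bar>" using z unfolding Px_def Sx_def D_def by auto
  have "\<bar>g (fst z)\<bar> - \<bar>g (snd z)\<bar> \<le> \<bar>g (fst z) - g (snd z)\<bar>" by (rule abs_triangle_ineq2)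
  moreover have "(1+d)*t * N (fst z - snd z) powr q = t * N (fst z - snd z) powr q + d * t * N (fst z - snd z) powr q"
    by (simp add: algebra_simps)
  ultimately show "z \<in> E t" unfolding E_mem using ne a b by auto
qed

lemma Py_sub: "t > 0 \<Longrightarrow> d > 0 \<Longrightarrow> Py t d \<subseteq> E t"
proof
  fix z assume t: "t > 0" and d: "d > 0" and z: "z \<in> Py t d"
  then have ne: "fst z \<noteq> snd z" unfolding Py_def diag_def by auto
  have a: "(1+d)*t * N (fst z - snd z) powr q \<le> \<bar>g (snd z)\<bar>" and
    b: "\<not> d*t * N (fst z - snd z) powr q \<le> \<bar>g (fst z)\<bar>" using z unfolding Py_def Sy_def D_def by auto
  have "\<bar>g (snd z)\<bar> - \<bar>g (fst z)\<bar> \<le> \<bar>g (fst z) - g (snd z)\<bar>" by (metis abs_minus_commute abs_triangle_ineq2)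
  moreover have "(1+d)*t * N (fst z - snd z) powr q = t * N (fst z - snd z) powr q + d * t * N (fst z - snd z) powr q"
    by (simp add: algebra_simps)
  ultimately show "z \<in> E t" unfolding E_mem using ne a b by auto
qed

lemma PxPy_disj: "t > 0 \<Longrightarrow> d > 0 \<Longrightarrow> Px t d \<inter> Py t d = {}"
proof (rule ccontr)
  assume t: "t > 0" and d: "d > 0" and "Px t d \<inter> Py t d \<noteq> {}"
  then obtain z where z: "z \<in> Px t d" "z \<in> Py t d" by blast
  have M: "N (fst z - snd z) powr q \<ge> 0" by simp
  have a: "(1+d)*t * N (fst z - snd z) powr q \<le> \<bar>g (snd z)\<bar>" using z(2) unfolding Py_def Sy_def by auto
  have a2: "(1+d)*t * N (fst z - snd z) powr q \<le> \<bar>g (fst z)\<bar>" using z(1) unfolding Px_def Sx_def by auto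
  have b: "\<not> d*t * N (fst z - snd z) powr q \<le> \<bar>g (snd z)\<bar>" using z(1) a2 unfolding Px_def D_def by auto
  have "d*t * N (fst z - snd z) powr q \<le> (1+d)*t * N (fst z - snd z) powr q"
    using t d M by (intro mult_right_mono) auto
  then show False using a b by linarith
qed

lemma UNIV_borel: "UNIV \<in> sets borel" by simp

lemma mult2: "(X::ennreal) \<le> A + B \<Longrightarrow> c * X \<le> c*A + c*B"
  by (metis distrib_left mult_left_mono zero_le)

lemma mult3: "(X::ennreal) \<le> A + B + C \<Longrightarrow> c * X \<le> c*A + c*B + c*C"
  by (metis distrib_left mult_left_mono zero_le)

lemma tp_mult: assumes "a > 0" "t > 0"
  shows "ennreal (t powr p) * (KM * ennreal ((a*t) powr (- p)) * X) = KM * ennreal (a powr (- p)) * X"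
proof -
  have "t powr p * (a*t) powr (- p) = a powr (- p)"
    using assms by (simp add: powr_mult powr_minus_divide field_simps)
  then have "ennreal (t powr p) * ennreal ((a*t) powr (- p)) = ennreal (a powr (- p))"
    by (simp flip: ennreal_mult)
  then show ?thesis by (metis (no_types, lifting) mult.assoc mult.left_commute)
qed

lemma tpSx: "a > 0 \<Longrightarrow> t > 0 \<Longrightarrow> P \<in> sets borel \<Longrightarrow>
  ennreal (t powr p) * emeasure \<mu> (Sx (a*t) P) = KM * ennreal (a powr (- p)) * Ip P"
  using Sx_meas[of "a*t" P] tp_mult[of a t "Ip P"] by simp

lemma tpSy: "a > 0 \<Longrightarrow> t > 0 \<Longrightarrow> P \<in> sets borel \<Longrightarrow>
  ennreal (t powr p) * emeasure \<mu> (Sy (a*t) P) = KM * ennreal (a powr (- p)) * Ip P"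
  using Sy_meas[of "a*t" P] tp_mult[of a t "Ip P"] by simp

lemma sub3: "A \<subseteq> B \<union> C \<union> G \<Longrightarrow> B \<in> sets M \<Longrightarrow> C \<in> sets M \<Longrightarrow> G \<in> sets M \<Longrightarrow>
   emeasure M A \<le> emeasure M B + emeasure M C + emeasure M G"
proof -
  assume a: "A \<subseteq> B \<union> C \<union> G" and m: "B \<in> sets M" "C \<in> sets M" "G \<in> sets M"
  have "emeasure M A \<le> emeasure M (B \<union> C \<union> G)" using a m by (intro emeasure_mono) auto
  also have "\<dots> \<le> emeasure M (B \<union> C) + emeasure M G" using m by (intro emeasure_subadditive) auto
  also have "\<dots> \<le> emeasure M B + emeasure M C + emeasure M G"
    using m by (intro add_right_mono emeasure_subadditive) auto
  finally show ?thesis .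
qed

lemma B0: assumes t: "t > 0"
  shows "ennreal (t powr p) * emeasure \<mu> (E t) \<le> 2 * (KM * ennreal ((1/2) powr (- p)) * F)"
proof -
  have "emeasure \<mu> (E t) \<le> emeasure \<mu> (Sx ((1/2)*t) UNIV \<union> Sy ((1/2)*t) UNIV)"
    by (intro emeasure_mono E_sub0 sets.Un Sx_sets Sy_sets UNIV_borel)
  also have "\<dots> \<le> emeasure \<mu> (Sx ((1/2)*t) UNIV) + emeasure \<mu> (Sy ((1/2)*t) UNIV)"
    by (intro emeasure_subadditive Sx_sets Sy_sets UNIV_borel)
  finally have "ennreal (t powr p) * emeasure \<mu> (E t) \<le> ennreal (t powr p) * emeasure \<mu> (Sx ((1/2)*t) UNIV) + ennreal (t powr p) * emeasure \<mu> (Sy ((1/2)*t) UNIV)"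
    by (rule mult2)
  also have "\<dots> = 2 * (KM * ennreal ((1/2) powr (- p)) * F)"
    using tpSx[of "1/2" t UNIV] tpSy[of "1/2" t UNIV] t by (simp add: mult_2)
  finally show ?thesis .
qed

lemma BU: assumes t: "t > 0" and d: "0 < d" "d < 1"
  shows "ennreal (t powr p) * emeasure \<mu> (E t) \<le> 2 * (KM * ennreal ((1-d) powr (- p)) * F)
     + ennreal (t powr p) * emeasure \<mu> (D t d d)"
proof -
  have "emeasure \<mu> (E t) \<le> emeasure \<mu> (Sx ((1-d)*t) UNIV) + emeasure \<mu> (Sy ((1-d)*t) UNIV) + emeasure \<mu> (D t d d)"
    by (intro sub3 E_subU Sx_sets Sy_sets D_sets UNIV_borel)
  then have "ennreal (t powr p) * emeasure \<mu> (E t) \<le> ennreal (t powr p) * emeasure \<mu> (Sx ((1-d)*t) UNIV) + ennreal (t powr p) * emeasure \<mu> (Sy ((1-d)*t) UNIV) + ennreal (t powr p) * emeasure \<mu> (D t d d)"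
    by (rule mult3)
  also have "\<dots> = 2 * (KM * ennreal ((1-d) powr (- p)) * F) + ennreal (t powr p) * emeasure \<mu> (D t d d)"
    using tpSx[of "1-d" t UNIV] tpSy[of "1-d" t UNIV] t d by (simp add: mult_2)
  finally show ?thesis .
qed

lemma Markov: assumes s: "s > 0" shows "emeasure lborel (- Ps s) \<le> ennreal (1/s) * F"
proof -
  have "- Ps s = {x. s \<le> \<bar>g x\<bar> powr p}" unfolding Ps_def by auto
  then show ?thesis unfolding F_eq using Markov_gen[OF s, of "\<lambda>x. \<bar>g x\<bar> powr p"] by simp
qed

lemma BD: assumes t: "t > 0" and a: "a > 0" and b: "b > 0" and s: "s > 0"
  shows "ennreal (t powr p) * emeasure \<mu> (D t a b) \<le> KM * ennreal (a powr (- p)) * Ip (Ps s)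
     + KM * ennreal (b powr (- p)) * Ip (Ps s) + ennreal (t powr p) * ((ennreal (1/s) * F) * (ennreal (1/s) * F))"
proof -
  have "emeasure \<mu> (D t a b) \<le> emeasure \<mu> (Sx (a*t) (Ps s)) + emeasure \<mu> (Sy (b*t) (Ps s)) + emeasure \<mu> ((- Ps s) \<times> (- Ps s))"
    by (intro sub3 D_sub Sx_sets Sy_sets Ps_sets) (simp add: Ps_sets)
  also have "emeasure \<mu> ((- Ps s) \<times> (- Ps s)) = emeasure lborel (- Ps s) * emeasure lborel (- Ps s)"
    by (intro lborel.emeasure_pair_measure_Times) auto
  also have "\<dots> \<le> (ennreal (1/s) * F) * (ennreal (1/s) * F)"
    using Markov[OF s] by (intro mult_mono) auto
  finally have "emeasure \<mu> (D t a b) \<le> emeasure \<mu> (Sx (a*t) (Ps s)) + emeasure \<mu> (Sy (b*t) (Ps s)) + (ennreal (1/s) * F) * (ennreal (1/s) * F)"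
    by (simp add: add_left_mono)
  then have "ennreal (t powr p) * emeasure \<mu> (D t a b) \<le> ennreal (t powr p) * emeasure \<mu> (Sx (a*t) (Ps s)) + ennreal (t powr p) * emeasure \<mu> (Sy (b*t) (Ps s)) + ennreal (t powr p) * ((ennreal (1/s) * F) * (ennreal (1/s) * F))"
    by (rule mult3)
  also have "\<dots> = KM * ennreal (a powr (- p)) * Ip (Ps s)
     + KM * ennreal (b powr (- p)) * Ip (Ps s) + ennreal (t powr p) * ((ennreal (1/s) * F) * (ennreal (1/s) * F))"
    using tpSx[OF a t Ps_sets] tpSy[OF b t Ps_sets] by simp
  finally show ?thesis .
qed

lemma BL: assumes t: "t > 0" and d: "0 < d"
  shows "2 * (KM * ennreal ((1+d) powr (- p)) * F) \<le> ennreal (t powr p) * emeasure \<mu> (E t)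
     + ennreal (t powr p) * emeasure \<mu> (D t (1+d) d) + ennreal (t powr p) * emeasure \<mu> (D t d (1+d))"
proof -
  have mP[measurable]: "Px t d \<in> sets \<mu>" "Py t d \<in> sets \<mu>" unfolding Px_def Py_def by (intro sets.Diff Sx_sets Sy_sets D_sets diag_sets UNIV_borel)+
  have 1: "emeasure \<mu> (Sx ((1+d)*t) UNIV) \<le> emeasure \<mu> (Px t d) + emeasure \<mu> (D t (1+d) d) + emeasure \<mu> diag"
    by (intro sub3 mP D_sets diag_sets) (auto simp: Px_def)
  have 2: "emeasure \<mu> (Sy ((1+d)*t) UNIV) \<le> emeasure \<mu> (Py t d) + emeasure \<mu> (D t d (1+d)) + emeasure \<mu> diag"
    by (intro sub3 mP D_sets diag_sets) (auto simp: Py_def)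
  have 3: "emeasure \<mu> (Px t d) + emeasure \<mu> (Py t d) \<le> emeasure \<mu> (E t)"
  proof -
    have "emeasure \<mu> (Px t d) + emeasure \<mu> (Py t d) = emeasure \<mu> (Px t d \<union> Py t d)"
      by (rule plus_emeasure[OF mP PxPy_disj[OF t d]])
    also have "\<dots> \<le> emeasure \<mu> (E t)" using Px_sub[OF t d] Py_sub[OF t d] by (intro emeasure_mono E_sets) auto
    finally show ?thesis .
  qed
  have "emeasure \<mu> (Sx ((1+d)*t) UNIV) + emeasure \<mu> (Sy ((1+d)*t) UNIV) \<le>
     emeasure \<mu> (E t) + emeasure \<mu> (D t (1+d) d) + emeasure \<mu> (D t d (1+d))"
  proof -
    have "emeasure \<mu> (Sx ((1+d)*t) UNIV) + emeasure \<mu> (Sy ((1+d)*t) UNIV) \<le>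
      (emeasure \<mu> (Px t d) + emeasure \<mu> (Py t d)) + emeasure \<mu> (D t (1+d) d) + emeasure \<mu> (D t d (1+d))"
      using add_mono[OF 1 2] diag_null by (simp add: add.assoc add.left_commute)
    also have "\<dots> \<le> emeasure \<mu> (E t) + emeasure \<mu> (D t (1+d) d) + emeasure \<mu> (D t d (1+d))"
      using 3 by (intro add_right_mono) 
    finally show ?thesis .
  qed
  note h = this
  have "ennreal (t powr p) * emeasure \<mu> (Sx ((1+d)*t) UNIV) + ennreal (t powr p) * emeasure \<mu> (Sy ((1+d)*t) UNIV) \<le>
     ennreal (t powr p) * emeasure \<mu> (E t) + ennreal (t powr p) * emeasure \<mu> (D t (1+d) d) + ennreal (t powr p) * emeasure \<mu> (D t d (1+d))"
    using mult3[OF h, of "ennreal (t powr p)"] by (simp add: distrib_left)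
  moreover have "ennreal (t powr p) * emeasure \<mu> (Sx ((1+d)*t) UNIV) + ennreal (t powr p) * emeasure \<mu> (Sy ((1+d)*t) UNIV)
     = 2 * (KM * ennreal ((1+d) powr (- p)) * F)"
    using tpSx[of "1+d" t UNIV] tpSy[of "1+d" t UNIV] t d by (simp add: mult_2)
  ultimately show ?thesis by simp
qed

lemma Ip_fin: "Ip P < \<infinity>"
  using Ip_le[of P] F_fin by (rule le_less_trans)

lemma Ps_lborel[measurable]: "Ps s \<in> sets lborel"
  using Ps_sets by simp

lemma J_lim: "(\<lambda>i. Ip (Ps (1 / Suc i))) \<longlonglongrightarrow> 0"
proof -
  define U where "U i x = indicator (Ps (1 / Suc i)) x * ennreal (\<bar>g x\<bar> powr p)" for i x
  define W where "W x = ennreal (\<bar>g x\<bar> powr p)" for x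
  have [measurable]: "U i \<in> borel_measurable lborel" for i unfolding U_def by measurable
  have [measurable]: "W \<in> borel_measurable lborel" unfolding W_def by measurable
  have "(\<lambda>i. (\<integral>\<^sup>+x. U i x \<partial>lborel)) \<longlonglongrightarrow> (\<integral>\<^sup>+x. (\<lambda>x. 0) x \<partial>(lborel :: 'a measure))"
  proof (rule nn_integral_dominated_convergence[of U lborel "\<lambda>x. 0" W])
    show "(\<integral>\<^sup>+x. W x \<partial>lborel) < \<infinity>" using F_fin F_eq unfolding W_def by simp
    show "AE x in lborel. U j x \<le> W x" for j
      by (auto simp: indicator_def U_def W_def)
    show "AE x in lborel. (\<lambda>i. U i x) \<longlonglongrightarrow> 0"
    proof (intro AE_I2 tendsto_eventually)
      fix x
      show "\<forall>\<^sub>F i in sequentially. U i x = 0"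
      proof (cases "\<bar>g x\<bar> powr p = 0")
        case True then show ?thesis by (simp add: U_def)
      next
        case False
        then have r: "\<bar>g x\<bar> powr p > 0" by simp
        then obtain i0 where i0: "inverse (real (Suc i0)) < \<bar>g x\<bar> powr p" using reals_Archimedean by blast
        have "x \<notin> Ps (1 / Suc i)" if "i \<ge> i0" for i
        proof -
          have "1 / real (Suc i) \<le> inverse (real (Suc i0))" using that by (simp add: field_simps)
          then show ?thesis using i0 unfolding Ps_def by simp
        qed
        then show ?thesis unfolding eventually_sequentially by (auto simp: indicator_def U_def)
      qed
    qed
  qed measurable
  then show ?thesis unfolding Ip_def U_def by simp
qed

definition kr where "kr = enn2real KM"
definition Fr where "Fr = enn2real F"
definition Jr where "Jr s = enn2real (Ip (Ps s))"
definition \<psi> where "\<psi> t = enn2real (ennreal (t powr p) * emeasure \<mu> (E t))"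
definition dD where "dD t a b = enn2real (ennreal (t powr p) * emeasure \<mu> (D t a b))"

lemma KM_eq: "KM = ennreal kr" unfolding kr_def using KM_fin by simp
lemma F_eqr: "F = ennreal Fr" unfolding Fr_def using F_fin by simp

lemma phi_fin: assumes t: "t > 0" shows "ennreal (t powr p) * emeasure \<mu> (E t) < \<infinity>"
proof -
  note B0[OF t]
  also have "2 * (KM * ennreal ((1/2) powr (- p)) * F) < \<infinity>"
    using KM_fin F_fin by (simp add: ennreal_mult_less_top)
  finally show ?thesis .
qed

lemma D_fin: assumes t: "t > 0" and a: "a > 0" and b: "b > 0" shows "ennreal (t powr p) * emeasure \<mu> (D t a b) < \<infinity>"
proof -
  note BD[OF t a b zero_less_one]
  also have "KM * ennreal (a powr (- p)) * Ip (Ps 1) + KM * ennreal (b powr (- p)) * Ip (Ps 1)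
      + ennreal (t powr p) * ((ennreal (1/1) * F) * (ennreal (1/1) * F)) < \<infinity>"
    using KM_fin F_fin Ip_fin[of "Ps 1"] by (simp add: ennreal_mult_less_top)
  finally show ?thesis .
qed

lemma phi_eq: "t > 0 \<Longrightarrow> ennreal (t powr p) * emeasure \<mu> (E t) = ennreal (\<psi> t)"
  unfolding \<psi>_def using phi_fin by simp

lemma RU: assumes t: "t > 0" and d: "0 < d" "d < 1"
  shows "\<psi> t \<le> 2 * (kr * (1-d) powr (- p) * Fr) + dD t d d"
proof -
  have "\<psi> t \<le> enn2real (2 * (KM * ennreal ((1-d) powr (- p)) * F) + ennreal (t powr p) * emeasure \<mu> (D t d d))"
    unfolding \<psi>_def using BU[OF t d] D_fin[OF t d(1) d(1)] KM_fin F_fin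
    by (intro enn2real_mono) (auto simp: ennreal_mult_less_top)
  also have "\<dots> = 2 * (kr * (1-d) powr (- p) * Fr) + dD t d d"
    using D_fin[OF t d(1) d(1)] KM_fin F_fin unfolding dD_def kr_def Fr_def
    by (subst enn2real_plus) (auto simp: ennreal_mult_less_top enn2real_mult)
  finally show ?thesis .
qed

lemma RD: assumes t: "t > 0" and a: "a > 0" and b: "b > 0" and s: "s > 0"
  shows "dD t a b \<le> kr * a powr (- p) * Jr s + kr * b powr (- p) * Jr s + t powr p * ((1/s) * Fr * ((1/s) * Fr))"
proof -
  have "dD t a b \<le> enn2real (KM * ennreal (a powr (- p)) * Ip (Ps s)
     + KM * ennreal (b powr (- p)) * Ip (Ps s) + ennreal (t powr p) * ((ennreal (1/s) * F) * (ennreal (1/s) * F)))"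
    unfolding dD_def using BD[OF t a b s] KM_fin F_fin Ip_fin[of "Ps s"]
    by (intro enn2real_mono) (auto simp: ennreal_mult_less_top)
  also have "\<dots> = kr * a powr (- p) * Jr s + kr * b powr (- p) * Jr s + t powr p * ((1/s) * Fr * ((1/s) * Fr))"
    using KM_fin F_fin Ip_fin[of "Ps s"] s unfolding Jr_def kr_def Fr_def
    by (subst enn2real_plus, simp add: ennreal_mult_less_top, simp add: ennreal_mult_less_top)+
       (simp add: enn2real_mult)
  finally show ?thesis .
qed

lemma RL: assumes t: "t > 0" and d: "0 < d"
  shows "2 * (kr * (1+d) powr (- p) * Fr) \<le> \<psi> t + dD t (1+d) d + dD t d (1+d)"
proof -
  have "2 * (kr * (1+d) powr (- p) * Fr) = enn2real (2 * (KM * ennreal ((1+d) powr (- p)) * F))"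
    unfolding kr_def Fr_def by (simp add: enn2real_mult)
  also have "\<dots> \<le> enn2real (ennreal (t powr p) * emeasure \<mu> (E t)
     + ennreal (t powr p) * emeasure \<mu> (D t (1+d) d) + ennreal (t powr p) * emeasure \<mu> (D t d (1+d)))"
    using BL[OF t d] phi_fin[OF t] D_fin[of t "1+d" d] D_fin[of t d "1+d"] t d
    by (intro enn2real_mono) auto
  also have "\<dots> = \<psi> t + dD t (1+d) d + dD t d (1+d)"
    using phi_fin[OF t] D_fin[of t "1+d" d] D_fin[of t d "1+d"] t d unfolding \<psi>_def dD_def
    by (subst enn2real_plus, simp, simp)+ simp
  finally show ?thesis .
qed

lemma RJ: assumes e: "e > 0" shows "\<exists>s>0. Jr s \<le> e"
proof -
  have "\<forall>\<^sub>F i in sequentially. Ip (Ps (1 / Suc i)) < ennreal e"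
    using order_tendstoD(2)[OF J_lim, of "ennreal e"] e by simp
  then obtain i where "Ip (Ps (1 / Suc i)) < ennreal e" unfolding eventually_sequentially by blast
  then have "Jr (1 / Suc i) \<le> e" unfolding Jr_def using e by (intro enn2real_leI) auto
  then show ?thesis by (intro exI[of _ "1 / Suc i"]) auto
qed

lemma kr_nn: "kr \<ge> 0" and Fr_nn: "Fr \<ge> 0" and Jr_nn: "Jr s \<ge> 0"
  unfolding kr_def Fr_def Jr_def by auto

lemma psi_lim: "(\<psi> \<longlongrightarrow> 2 * (kr * Fr)) (at_right 0)"
proof (rule tendstoI)
  fix e :: real assume e: "e > 0"
  define L where "L = 2 * (kr * Fr)"
  have c1: "((\<lambda>d. 2 * (kr * (1-d) powr (- p) * Fr)) \<longlongrightarrow> L) (at_right 0)"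
  proof -
    have "((\<lambda>d. 2 * (kr * (1-d) powr (- p) * Fr)) \<longlongrightarrow> 2 * (kr * (1-0) powr (- p) * Fr)) (at_right 0)"
      by (intro tendsto_intros) auto
    then show ?thesis by (simp add: L_def)
  qed
  have c2: "((\<lambda>d. 2 * (kr * (1+d) powr (- p) * Fr)) \<longlongrightarrow> L) (at_right 0)"
  proof -
    have "((\<lambda>d. 2 * (kr * (1+d) powr (- p) * Fr)) \<longlongrightarrow> 2 * (kr * (1+0) powr (- p) * Fr)) (at_right 0)"
      by (intro tendsto_intros) auto
    then show ?thesis by (simp add: L_def)
  qed
  have lt1: "eventually (\<lambda>d. d < 1) (at_right (0::real))"
    unfolding eventually_at_right_field by (intro exI[of _ 1]) auto
  have ev: "eventually (\<lambda>d. 0 < d \<and> d < 1 \<and> dist (2 * (kr * (1-d) powr (- p) * Fr)) L < e/4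
      \<and> dist (2 * (kr * (1+d) powr (- p) * Fr)) L < e/4) (at_right 0)"
  proof -
    have e4: "e/4 > 0" using e by simp
    show ?thesis
      by (intro eventually_conj eventually_at_right_less lt1 tendstoD[OF c1 e4] tendstoD[OF c2 e4])
  qed
  obtain d where d: "0 < d" "d < 1" "dist (2 * (kr * (1-d) powr (- p) * Fr)) L < e/4"
      "dist (2 * (kr * (1+d) powr (- p) * Fr)) L < e/4"
    using eventually_happens'[OF _ ev] by auto
  have d3: "2 * (kr * (1-d) powr (- p) * Fr) < L + e/4" using d(3) unfolding dist_real_def abs_less_iff by linarith
  have d4: "2 * (kr * (1+d) powr (- p) * Fr) > L - e/4" using d(4) unfolding dist_real_def abs_less_iff by linarith
  define C1 where "C1 = 2 * kr * d powr (- p)"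
  define C2 where "C2 = 2 * kr * ((1+d) powr (- p) + d powr (- p))"
  have C1: "C1 \<ge> 0" and C2: "C2 \<ge> 0" unfolding C1_def C2_def using kr_nn by auto
  define \<eta> where "\<eta> = e / (4 * (C1 + C2 + 1))"
  have \<eta>: "\<eta> > 0" unfolding \<eta>_def using e C1 C2 by simp
  obtain s where s: "s > 0" "Jr s \<le> \<eta>" using RJ[OF \<eta>] by blast
  have CJ: "(C1 + C2) * Jr s < e/4"
  proof -
    have "(C1 + C2) * Jr s \<le> (C1 + C2) * \<eta>" using C1 C2 s by (intro mult_left_mono) auto
    also have "\<dots> < (C1 + C2 + 1) * \<eta>" using \<eta> by (intro mult_strict_right_mono) auto
    also have "\<dots> = e/4" proof -
      have "C1 + C2 + 1 > 0" using C1 C2 by simp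
      then show ?thesis unfolding \<eta>_def by (simp add: field_simps)
    qed
    finally show ?thesis .
  qed
  then have CJ': "C1 * Jr s + C2 * Jr s < e/4" by (simp add: algebra_simps)
  have CJ1: "C1 * Jr s \<ge> 0" "C2 * Jr s \<ge> 0" using C1 C2 Jr_nn by auto
  define B where "B = (1/s) * Fr * ((1/s) * Fr)"
  have tp: "((\<lambda>t. t powr p * B) \<longlongrightarrow> 0 * B) (at_right 0)"
    by (intro tendsto_intros tendsto_zero_powrI) (auto simp: p_pos eventually_at_right_less eventually_mono[OF eventually_at_right_less])
  then have evt: "eventually (\<lambda>t. t powr p * B < e/8) (at_right 0)"
    using order_tendstoD(2)[OF tp, of "e/8"] e by simp
  show "eventually (\<lambda>t. dist (\<psi> t) (2 * (kr * Fr)) < e) (at_right 0)"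
    using evt eventually_at_right_less
  proof (eventually_elim)
    case (elim t)
    then have t: "t > 0" and tB: "t powr p * B < e/8" by auto
    have u: "\<psi> t \<le> 2 * (kr * (1-d) powr (- p) * Fr) + dD t d d" using RU[OF t d(1,2)] .
    have u2: "dD t d d \<le> C1 * Jr s + t powr p * B"
      using RD[OF t d(1) d(1) s(1)] unfolding C1_def B_def by (simp add: algebra_simps)
    have l: "2 * (kr * (1+d) powr (- p) * Fr) \<le> \<psi> t + dD t (1+d) d + dD t d (1+d)" using RL[OF t d(1)] .
    have l2: "dD t (1+d) d + dD t d (1+d) \<le> C2 * Jr s + 2 * (t powr p * B)"
    proof -
      have r1: "dD t (1+d) d \<le> kr * (1+d) powr (- p) * Jr s + kr * d powr (- p) * Jr s + t powr p * B"
        using RD[OF t _ d(1) s(1), of "1+d"] d unfolding B_def by simp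
      have r2: "dD t d (1+d) \<le> kr * d powr (- p) * Jr s + kr * (1+d) powr (- p) * Jr s + t powr p * B"
        using RD[OF t d(1) _ s(1), of "1+d"] d unfolding B_def by simp
      have "C2 * Jr s = 2 * (kr * (1+d) powr (- p) * Jr s) + 2 * (kr * d powr (- p) * Jr s)"
        unfolding C2_def by (simp add: algebra_simps)
      then show ?thesis using r1 r2 by linarith
    qed
    have "\<psi> t - L < e" using u u2 CJ' CJ1 tB d3 by linarith
    moreover have "L - \<psi> t < e" using l l2 CJ' CJ1 tB d4 by linarith
    ultimately show ?case unfolding L_def[symmetric] dist_real_def abs_less_iff by linarith
  qed
qed

lemma const_eq: "2 * (KM * ennreal ((1/2) powr (- p)) * F) = ennreal (2 powr (p + 1)) * KM * F"
proof -
  have "2 powr (p + 1) = 2 * (1/2) powr (- p)"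
    by (simp add: powr_add powr_minus_divide powr_divide)
  then have "ennreal (2 powr (p + 1)) = 2 * ennreal ((1/2) powr (- p))"
    by (simp add: ennreal_mult)
  then show ?thesis by (simp add: mult_ac)
qed

lemma lim_eq: "ennreal (2 * (kr * Fr)) = 2 * KM * F"
  unfolding KM_eq F_eqr using kr_nn Fr_nn by (simp add: ennreal_mult mult_ac)

lemma phi_lim: "((\<lambda>t. ennreal (t powr p) * emeasure \<mu> (E t)) \<longlongrightarrow> 2 * KM * F) (at_right 0)"
proof -
  have "((\<lambda>t. ennreal (\<psi> t)) \<longlongrightarrow> ennreal (2 * (kr * Fr))) (at_right 0)"
    by (intro tendsto_ennrealI psi_lim)
  then have "((\<lambda>t. ennreal (\<psi> t)) \<longlongrightarrow> 2 * KM * F) (at_right 0)" unfolding lim_eq .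
  moreover have "eventually (\<lambda>t. ennreal (\<psi> t) = ennreal (t powr p) * emeasure \<mu> (E t)) (at_right 0)"
    using eventually_at_right_less by (rule eventually_mono) (simp add: phi_eq)
  ultimately show ?thesis by (rule tendsto_cong[THEN iffD1, rotated])
qed

lemma main_bounds:
  "2 * KM * F \<le> (SUP t\<in>{0<..}. ennreal (t powr p) * emeasure \<mu> (E t))"
  "(SUP t\<in>{0<..}. ennreal (t powr p) * emeasure \<mu> (E t)) \<le> ennreal (2 powr (p + 1)) * KM * F"
proof -
  show "(SUP t\<in>{0<..}. ennreal (t powr p) * emeasure \<mu> (E t)) \<le> ennreal (2 powr (p + 1)) * KM * F"
    using B0 const_eq by (intro SUP_least) auto
  show "2 * KM * F \<le> (SUP t\<in>{0<..}. ennreal (t powr p) * emeasure \<mu> (E t))"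
  proof (rule tendsto_upperbound[OF phi_lim])
    show "\<forall>\<^sub>F t in at_right 0. ennreal (t powr p) * emeasure \<mu> (E t) \<le> (SUP t\<in>{0<..}. ennreal (t powr p) * emeasure \<mu> (E t))"
      using eventually_at_right_less by (rule eventually_mono) (auto intro: SUP_upper)
  qed simp
qed

end

lemma completion_eq:
  assumes S: "S \<in> sets M" and W: "W \<in> null_sets M" and AS: "A - W = S - W"
  shows "emeasure (completion M) A = emeasure M S"
proof -
  have Wm: "W \<in> sets M" using W by auto
  have A: "A = (S - W) \<union> (A \<inter> W)" using AS by blast
  have Asets: "A \<in> sets (completion M)"
    using S Wm W by (subst A, intro sets_completionI[of _ "S - W" "A \<inter> W" W]) auto
  have "emeasure (completion M) A \<le> emeasure (completion M) (S \<union> W)"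
    using A S Wm by (intro emeasure_mono) auto
  also have "\<dots> = emeasure M S" using S Wm W by (simp add: emeasure_Un_null_set)
  finally have 1: "emeasure (completion M) A \<le> emeasure M S" .
  have "emeasure M S = emeasure (completion M) (S - W)" using S W Wm by (simp add: emeasure_Diff_null_set)
  also have "\<dots> \<le> emeasure (completion M) A" using A Asets by (intro emeasure_mono) auto
  finally show ?thesis using 1 by simp
qed

theorem theorem1p1:
  fixes K :: "'a::euclidean_space set" and p :: real and f :: "'a \<Rightarrow> real"
  assumes "1 \<le> p"
    and "compact K" and "convex K" and "interior K \<noteq> {}" and "uminus ` K = K"
    and "f \<in> borel_measurable lebesgue"
    and "integrable lebesgue (\<lambda>x. \<bar>f x\<bar> powr p)"
  shows "2 * emeasure lebesgue K * (\<integral>\<^sup>+ x. ennreal (\<bar>f x\<bar> powr p) \<partial>lebesgue)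
           \<le> weak_Lp_pow (lebesgue :: ('a \<times> 'a) measure) p
                (\<lambda>(x, y). if x = y then 0 else
                   (f x - f y) / (minkowski_functional K (x - y)) powr (real DIM('a) / p))
       \<and> weak_Lp_pow (lebesgue :: ('a \<times> 'a) measure) p
                (\<lambda>(x, y). if x = y then 0 else
                   (f x - f y) / (minkowski_functional K (x - y)) powr (real DIM('a) / p))
           \<le> 2 powr (p + 1) * emeasure lebesgue K * (\<integral>\<^sup>+ x. ennreal (\<bar>f x\<bar> powr p) \<partial>lebesgue)
       \<and> ((\<lambda>t. ennreal (t powr p) * emeasure (lebesgue :: ('a \<times> 'a) measure)
              {(x, y). x \<noteq> y \<and> \<bar>f x - f y\<bar> / (minkowski_functional K (x - y)) powr (real DIM('a) / p) \<ge> t})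
           \<longlongrightarrow> 2 * emeasure lebesgue K * (\<integral>\<^sup>+ x. ennreal (\<bar>f x\<bar> powr p) \<partial>lebesgue)) (at_right 0)"
proof -
  interpret kp K p using assms by unfold_locales
  obtain g where gm: "g \<in> borel_measurable lborel" and ae: "AE x in lborel. f x = g x"
    using completion_ex_borel_measurable_real[OF assms(6)] by auto
  have gb: "g \<in> borel_measurable borel" using gm by simp
  have ae': "AE x in lebesgue. f x = g x" using AE_completion[OF ae] .
  have "integrable lebesgue (\<lambda>x. \<bar>g x\<bar> powr p)"
  proof (rule integrable_cong_AE_imp[OF assms(7)])
    have [measurable]: "g \<in> borel_measurable lborel" by (rule gm)
    have "(\<lambda>x. \<bar>g x\<bar> powr p) \<in> borel_measurable lborel" by measurable
    then show "(\<lambda>x. \<bar>g x\<bar> powr p) \<in> borel_measurable lebesgue" by (rule measurable_completion)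
    show "AE x in lebesgue. \<bar>f x\<bar> powr p = \<bar>g x\<bar> powr p" using ae' by auto
  qed
  then have gint: "integrable lborel (\<lambda>x. \<bar>g x\<bar> powr p)"
    using gm by (subst integrable_completion[symmetric]) auto
  interpret G: kpg K p g using gb gint by unfold_locales
  have hF: "(\<integral>\<^sup>+ x. ennreal (\<bar>f x\<bar> powr p) \<partial>lebesgue) = G.F"
  proof -
    have "(\<integral>\<^sup>+ x. ennreal (\<bar>f x\<bar> powr p) \<partial>lebesgue) = (\<integral>\<^sup>+ x. ennreal (\<bar>g x\<bar> powr p) \<partial>lebesgue)"
      using ae' by (intro nn_integral_cong_AE) auto
    then show ?thesis unfolding G.F_eq by (simp add: nn_integral_completion)
  qed
  have hK: "emeasure lebesgue K = G.KM" using K_sets by simp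
  obtain Z where Z: "{x \<in> space lborel. \<not> f x = g x} \<subseteq> Z" "emeasure lborel Z = 0" "Z \<in> sets lborel"
    using ae by (rule AE_E)
  have Zn: "Z \<in> null_sets lborel" using Z by auto
  define W where "W = (Z \<times> UNIV) \<union> (UNIV \<times> Z)"
  have Wn: "W \<in> null_sets G.\<mu>" unfolding W_def
    using Zn by (intro null_sets.Un lborel.times_in_null_sets1 lborel.times_in_null_sets2) auto
  have LB: "(lebesgue :: ('a \<times> 'a) measure) = completion G.\<mu>" by (simp add: lborel_prod)
  define Ef where "Ef t = {(x, y). x \<noteq> y \<and> \<bar>f x - f y\<bar> / (minkowski_functional K (x - y)) powr (real DIM('a) / p) \<ge> t}" for t
  have Eeq: "emeasure (lebesgue :: ('a \<times> 'a) measure) (Ef t) = emeasure G.\<mu> (G.E t)" for t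
    unfolding LB
  proof (rule completion_eq[OF G.E_sets Wn])
    show "Ef t - W = G.E t - W"
    proof (intro set_eqI iffI)
      fix z assume "z \<in> Ef t - W"
      moreover obtain x y where z: "z = (x, y)" by force
      ultimately have "x \<notin> Z" "y \<notin> Z" "z \<in> Ef t" "z \<notin> W" unfolding W_def by auto
      then have "f x = g x" "f y = g y" using Z(1) by auto
      then show "z \<in> G.E t - W" using \<open>z \<in> Ef t\<close> \<open>z \<notin> W\<close> unfolding z Ef_def G.E_def q_def by auto
    next
      fix z assume "z \<in> G.E t - W"
      moreover obtain x y where z: "z = (x, y)" by force
      ultimately have "x \<notin> Z" "y \<notin> Z" "z \<in> G.E t" "z \<notin> W" unfolding W_def by auto
      then have "f x = g x" "f y = g y" using Z(1) by auto
      then show "z \<in> Ef t - W" using \<open>z \<in> G.E t\<close> \<open>z \<notin> W\<close> unfolding z Ef_def G.E_def q_def by auto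
    qed
  qed
  define Gf where "Gf = (\<lambda>(x, y). if x = y then 0 else
                   (f x - f y) / (minkowski_functional K (x - y)) powr (real DIM('a) / p))"
  have Seq: "{z \<in> space (lebesgue :: ('a \<times> 'a) measure). t \<le> \<bar>Gf z\<bar>} = Ef t" if t: "t > 0" for t
  proof (intro set_eqI)
    fix z :: "'a \<times> 'a"
    obtain x y where z: "z = (x, y)" by force
    have "\<bar>(f x - f y) / (minkowski_functional K (x - y)) powr (real DIM('a) / p)\<bar>
        = \<bar>f x - f y\<bar> / (minkowski_functional K (x - y)) powr (real DIM('a) / p)"
      by (simp add: abs_divide)
    then show "z \<in> {z \<in> space lebesgue. t \<le> \<bar>Gf z\<bar>} \<longleftrightarrow> z \<in> Ef t"
      using t unfolding z Gf_def Ef_def by auto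
  qed
  have WL: "weak_Lp_pow (lebesgue :: ('a \<times> 'a) measure) p Gf = (SUP t\<in>{0<..}. ennreal (t powr p) * emeasure G.\<mu> (G.E t))"
    unfolding weak_Lp_pow_def using Seq Eeq by (intro SUP_cong) auto
  have lim: "((\<lambda>t. ennreal (t powr p) * emeasure (lebesgue :: ('a \<times> 'a) measure) (Ef t)) \<longlongrightarrow> 2 * G.KM * G.F) (at_right 0)"
    using G.phi_lim unfolding Eeq .
  show ?thesis
    using G.main_bounds lim unfolding hF hK WL[unfolded Gf_def] Ef_def by simp
qed

end
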